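(* Let $B=(b_{pq})\in\mathcal A_n$ and $R_{ij}^{kl}\in E(B)$ (with $i<j$, $k<l$), and let $A=(a_{pq})$ be any real $n\times n$ matrix. Then the following are equivalent: (1) $A\in\mathcal A_n$ and $A\xrightarrow{ij,kl}B$ in the ASM graph; (2) $a_{ik}-b_{ik}=1$, $a_{il}-b_{il}=-1$, $a_{jk}-b_{jk}=-1$, $a_{jl}-b_{jl}=1$, and $a_{pq}=b_{pq}$ for every $(p,q)\notin\{(i,k),(i,l),(j,k),(j,l)\}$.
   Context: An $n\times n$ matrix $A=(a_{ij})$ is an alternating sign matrix (ASM) if all $a_{ij}\in\{-1,0,1\}$, all partial row sums $\sum_{k\le j}a_{ik}$ and partial column sums $\sum_{k\le i}a_{kj}$ lie in $\{0,1\}$, and every full row sum and column sum equals $1$; $\mathcal A_n$ is the set of $n\times n$ ASMs. The corner sum matrix is $\widetilde A(i,j)=\sum_{p\le i,q\le j}a_{pq}$, with $\widetilde A(i,j)=0$ if $i=0$ or $j=0$. For $i<j$, $k<l$ in $[n]$, $R_{ij}^{kl}=\{(p,q): i\le p<j,\ k\le q<l\}$ and $\widetilde R_{ij}^{kl}$ is its $0/1$ indicator matrix. $E(A)$ (essential rectangles): those $R_{ij}^{kl}$ with, for all $(p,q)\in R_{ij}^{kl}$, $\widetilde A(p,k)=\widetilde A(p,k-1)$, $\widetilde A(p,l)=\widetilde A(p,l-1)+1$, $\widetilde A(i,q)=\widetilde A(i-1,q)$, $\widetilde A(j,q)=\widetilde A(j-1,q)+1$. $E^*(A)$ (dual essential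 rectangles): those with $\widetilde A(p,k)=\widetilde A(p,k-1)+1$, $\widetilde A(p,l)=\widetilde A(p,l-1)$, $\widetilde A(i,q)=\widetilde A(i-1,q)+1$, $\widetilde A(j,q)=\widetilde A(j-1,q)$. The operator $r_{ij}^{kl}$ sends $A$ to the ASM with corner sum matrix $\widetilde A+\widetilde R_{ij}^{kl}$ if $R_{ij}^{kl}\in E(A)$, $\widetilde A-\widetilde R_{ij}^{kl}$ if $R_{ij}^{kl}\in E^*(A)$, $\widetilde A$ otherwise. The bigrassmannian statistic is $\beta(A)=\sum_{i,j=1}^n\min(i,j)-\sum_{i,j=1}^n\widetilde A(i,j)$. ASM graph edge: $A\xrightarrow{ij,kl}B$ if $B=r_{ij}^{kl}(A)$ and $\beta(A)<\beta(B)$. *)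

theory Defs
  imports Complex_Main
begin

text \<open>An n x n real matrix is represented as a function nat => nat => real;
  only the entries with indices in {1..n} x {1..n} are relevant.\<close>

definition is_asm :: "nat \<Rightarrow> (nat \<Rightarrow> nat \<Rightarrow> real) \<Rightarrow> bool" where
  "is_asm n A \<longleftrightarrow>
     (\<forall>p\<in>{1..n}. \<forall>q\<in>{1..n}. A p q \<in> {-1, 0, 1}) \<and>
     (\<forall>p\<in>{1..n}. \<forall>q\<in>{1..n}. (\<Sum>r\<in>{1..q}. A p r) \<in> {0, 1}) \<and>
     (\<forall>p\<in>{1..n}. \<forall>q\<in>{1..n}. (\<Sum>r\<in>{1..p}. A r q) \<in> {0, 1}) \<and>
     (\<forall>p\<in>{1..n}. (\<Sum>r\<in>{1..n}. A p r) = 1) \<and>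
     (\<forall>q\<in>{1..n}. (\<Sum>r\<in>{1..n}. A r q) = 1)"

definition cs :: "(nat \<Rightarrow> nat \<Rightarrow> real) \<Rightarrow> nat \<Rightarrow> nat \<Rightarrow> real" where
  "cs A p q = (\<Sum>x\<in>{1..p}. \<Sum>y\<in>{1..q}. A x y)"

definition rect_ind :: "nat \<Rightarrow> nat \<Rightarrow> nat \<Rightarrow> nat \<Rightarrow> nat \<Rightarrow> nat \<Rightarrow> real" where
  "rect_ind i j k l p q = (if i \<le> p \<and> p < j \<and> k \<le> q \<and> q < l then 1 else 0)"

definition ess_rect :: "(nat \<Rightarrow> nat \<Rightarrow> real) \<Rightarrow> nat \<Rightarrow> nat \<Rightarrow> nat \<Rightarrow> nat \<Rightarrow> bool" where
  "ess_rect A i j k l \<longleftrightarrow>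
     (\<forall>p q. i \<le> p \<and> p < j \<and> k \<le> q \<and> q < l \<longrightarrow>
        cs A p k = cs A p (k - 1) \<and>
        cs A p l = cs A p (l - 1) + 1 \<and>
        cs A i q = cs A (i - 1) q \<and>
        cs A j q = cs A (j - 1) q + 1)"

definition dual_ess_rect :: "(nat \<Rightarrow> nat \<Rightarrow> real) \<Rightarrow> nat \<Rightarrow> nat \<Rightarrow> nat \<Rightarrow> nat \<Rightarrow> bool" where
  "dual_ess_rect A i j k l \<longleftrightarrow>
     (\<forall>p q. i \<le> p \<and> p < j \<and> k \<le> q \<and> q < l \<longrightarrow>
        cs A p k = cs A p (k - 1) + 1 \<and>
        cs A p l = cs A p (l - 1) \<and>
        cs A i q = cs A (i - 1) q + 1 \<and>
        cs A j q = cs A (j - 1) q)"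

definition r_cs :: "nat \<Rightarrow> nat \<Rightarrow> nat \<Rightarrow> nat \<Rightarrow> (nat \<Rightarrow> nat \<Rightarrow> real) \<Rightarrow> nat \<Rightarrow> nat \<Rightarrow> real" where
  "r_cs i j k l A p q =
     (if ess_rect A i j k l then cs A p q + rect_ind i j k l p q
      else if dual_ess_rect A i j k l then cs A p q - rect_ind i j k l p q
      else cs A p q)"

definition beta :: "nat \<Rightarrow> (nat \<Rightarrow> nat \<Rightarrow> real) \<Rightarrow> real" where
  "beta n A = (\<Sum>p\<in>{1..n}. \<Sum>q\<in>{1..n}. real (min p q)) - (\<Sum>p\<in>{1..n}. \<Sum>q\<in>{1..n}. cs A p q)"

text \<open>ASM graph edge A --(ij,kl)--> B: B = r_ij^kl(A) (B is the n x n ASM whose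
  corner sum matrix is that of r_ij^kl(A)) and beta(A) < beta(B).\<close>
definition asm_edge :: "nat \<Rightarrow> nat \<Rightarrow> nat \<Rightarrow> nat \<Rightarrow> nat \<Rightarrow> (nat \<Rightarrow> nat \<Rightarrow> real) \<Rightarrow> (nat \<Rightarrow> nat \<Rightarrow> real) \<Rightarrow> bool" where
  "asm_edge n i j k l A B \<longleftrightarrow>
     is_asm n B \<and>
     (\<forall>p\<in>{1..n}. \<forall>q\<in>{1..n}. cs B p q = r_cs i j k l A p q) \<and>
     beta n A < beta n B"

end

theory Submission
  imports Defs
begin

definition ind :: "nat \<Rightarrow> nat \<Rightarrow> real" where
  "ind a p = (if p = a then 1 else 0)"

lemma sum_ind: "1 \<le> a \<Longrightarrow> (\<Sum>p\<in>{1..x}. ind a p) = (if a \<le> x then 1 else 0)"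
  unfolding ind_def by (simp add: sum.delta')

lemma rs_step0: "1 \<le> (q::nat) \<Longrightarrow> (\<Sum>r\<in>{1..q}. f r) = (\<Sum>r\<in>{1..q-1}. f r) + (f q::real)"
proof -
  assume "1 \<le> q"
  then obtain m where q: "q = Suc m" by (cases q) auto
  show ?thesis unfolding q by (simp add: sum.cl_ivl_Suc)
qed

lemma rs_step: "1 \<le> (q::nat) \<Longrightarrow> (\<Sum>r\<in>{1..q}. X p r) = (\<Sum>r\<in>{1..q-1}. X p r) + (X p q::real)"
  by (rule rs_step0)

lemma cs_row: "1 \<le> p \<Longrightarrow> cs A p q = cs A (p-1) q + (\<Sum>y\<in>{1..q}. A p y)"
  unfolding cs_def by (cases p) (auto simp: sum.cl_ivl_Suc)

lemma cs_col: "1 \<le> q \<Longrightarrow> cs A p q = cs A p (q-1) + (\<Sum>x\<in>{1..p}. A x q)"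
  unfolding cs_def
proof -
  assume "1 \<le> q"
  then obtain m where q: "q = Suc m" by (cases q) auto
  have "(\<Sum>x\<in>{1..p}. \<Sum>y\<in>{1..q}. A x y) = (\<Sum>x\<in>{1..p}. (\<Sum>y\<in>{1..m}. A x y) + A x q)"
    by (rule sum.cong) (auto simp: q sum.cl_ivl_Suc)
  then show "(\<Sum>x\<in>{1..p}. \<Sum>y\<in>{1..q}. A x y) = (\<Sum>x\<in>{1..p}. \<Sum>y\<in>{1..q - 1}. A x y) + (\<Sum>x\<in>{1..p}. A x q)"
    by (simp add: q sum.distrib)
qed

lemma cs_entry: "1 \<le> p \<Longrightarrow> 1 \<le> q \<Longrightarrow>
   A p q = cs A p q - cs A (p-1) q - cs A p (q-1) + cs A (p-1) (q-1)"
  using cs_row[of p A q] cs_row[of p A "q-1"] rs_step[of q A p] by simp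

lemma cs_0: "cs A 0 q = 0" unfolding cs_def by simp

lemma csD:
  assumes "1 \<le> i" "i < j" "1 \<le> k" "k < l"
  shows "cs (\<lambda>p q. B p q + (ind i p - ind j p) * (ind k q - ind l q)) x y = cs B x y + rect_ind i j k l x y"
proof -
  have "cs (\<lambda>p q. B p q + (ind i p - ind j p) * (ind k q - ind l q)) x y
     = cs B x y + (\<Sum>p\<in>{1..x}. \<Sum>q\<in>{1..y}. (ind i p - ind j p) * (ind k q - ind l q))"
    unfolding cs_def by (simp add: sum.distrib)
  also have "(\<Sum>p\<in>{1..x}. \<Sum>q\<in>{1..y}. (ind i p - ind j p) * (ind k q - ind l q))
     = (\<Sum>p\<in>{1..x}. (ind i p - ind j p)) * (\<Sum>q\<in>{1..y}. (ind k q - ind l q))"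
    by (simp add: sum_product)
  also have "\<dots> = rect_ind i j k l x y"
    using assms sum_ind[of i x] sum_ind[of j x] sum_ind[of k y] sum_ind[of l y]
    by (simp add: sum_subtractf rect_ind_def del: One_nat_def)
  finally show ?thesis .
qed

lemma sum2_shift:
  assumes "\<forall>p\<in>{1..n}. \<forall>q\<in>{1..n}. F p q = G p q + (H p q::real)"
  shows "(\<Sum>p\<in>{1..n}. \<Sum>q\<in>{1..n}. F p q) = (\<Sum>p\<in>{1..n}. \<Sum>q\<in>{1..n}. G p q) + (\<Sum>p\<in>{1..n}. \<Sum>q\<in>{1..n}. H p q)"
proof -
  have "(\<Sum>p\<in>{1..n}. \<Sum>q\<in>{1..n}. F p q) = (\<Sum>p\<in>{1..n}. \<Sum>q\<in>{1..n}. G p q + H p q)"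
    using assms by (intro sum.cong refl) auto
  then show ?thesis by (simp add: sum.distrib)
qed

lemma sumR_pos:
  assumes "1 \<le> i" "i < j" "j \<le> n" "1 \<le> k" "k < l" "l \<le> n"
  shows "(\<Sum>p\<in>{1..n}. \<Sum>q\<in>{1..n}. rect_ind i j k l p q) > 0"
proof -
  have nn: "\<And>p q. rect_ind i j k l p q \<ge> 0" by (simp add: rect_ind_def)
  have "rect_ind i j k l i k \<le> (\<Sum>q\<in>{1..n}. rect_ind i j k l i q)"
    using assms nn by (intro member_le_sum) auto
  also have "\<dots> \<le> (\<Sum>p\<in>{1..n}. \<Sum>q\<in>{1..n}. rect_ind i j k l p q)"
    using assms nn by (intro member_le_sum[where f="\<lambda>p. \<Sum>q\<in>{1..n}. rect_ind i j k l p q"] sum_nonneg) auto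
  finally show ?thesis using assms by (simp add: rect_ind_def)
qed

theorem mainTheorem6:
  fixes n i j k l :: nat and A B :: "nat \<Rightarrow> nat \<Rightarrow> real"
  assumes "is_asm n B"
    and "1 \<le> i" and "i < j" and "j \<le> n"
    and "1 \<le> k" and "k < l" and "l \<le> n"
    and "ess_rect B i j k l"
  shows "(is_asm n A \<and> asm_edge n i j k l A B) \<longleftrightarrow>
     (A i k - B i k = 1 \<and> A i l - B i l = -1 \<and>
      A j k - B j k = -1 \<and> A j l - B j l = 1 \<and>
      (\<forall>p\<in>{1..n}. \<forall>q\<in>{1..n}. (p, q) \<notin> {(i, k), (i, l), (j, k), (j, l)} \<longrightarrow> A p q = B p q))"
proof -
  note ij = assms(2-7)
  define D where "D = (\<lambda>p q. (ind i p - ind j p) * (ind k q - ind l q))"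
  define A' where "A' = (\<lambda>p q. B p q + D p q)"
  define R where "R = rect_ind i j k l"
  have csA': "\<And>x y. cs A' x y = cs B x y + R x y"
    unfolding A'_def D_def R_def using csD ij by blast
  have Dv: "D i k = 1" "D i l = -1" "D j k = -1" "D j l = 1"
    using ij by (auto simp: D_def ind_def)
  have D0: "\<And>p q. (p,q) \<notin> {(i, k), (i, l), (j, k), (j, l)} \<Longrightarrow> D p q = 0"
    by (auto simp: D_def ind_def)
  have E2: "(A i k - B i k = 1 \<and> A i l - B i l = -1 \<and>
      A j k - B j k = -1 \<and> A j l - B j l = 1 \<and>
      (\<forall>p\<in>{1..n}. \<forall>q\<in>{1..n}. (p, q) \<notin> {(i, k), (i, l), (j, k), (j, l)} \<longrightarrow> A p q = B p q))
      \<longleftrightarrow> (\<forall>p\<in>{1..n}. \<forall>q\<in>{1..n}. A p q = A' p q)" (is "?P2 \<longleftrightarrow> ?Q")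
  proof
    assume h: ?P2
    show ?Q
    proof (intro ballI)
      fix p q assume pq: "p \<in> {1..n}" "q \<in> {1..n}"
      show "A p q = A' p q"
      proof (cases "(p,q) \<in> {(i, k), (i, l), (j, k), (j, l)}")
        case True then show ?thesis using h Dv by (auto simp: A'_def)
      next
        case False then show ?thesis using h D0[OF False] pq by (auto simp: A'_def)
      qed
    qed
  next
    assume h: ?Q
    have r: "i \<in> {1..n}" "j \<in> {1..n}" "k \<in> {1..n}" "l \<in> {1..n}" using ij by auto
    show ?P2 using h[rule_format, OF r(1) r(3)] h[rule_format, OF r(1) r(4)]
        h[rule_format, OF r(2) r(3)] h[rule_format, OF r(2) r(4)] h D0 Dv
      by (auto simp: A'_def)
  qed
  have E3: "(\<forall>p\<in>{1..n}. \<forall>q\<in>{1..n}. A p q = A' p q) \<longleftrightarrow> (\<forall>x\<le>n. \<forall>y\<le>n. cs A x y = cs B x y + R x y)"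
    (is "?Q \<longleftrightarrow> ?C")
  proof
    assume h: ?Q
    show ?C
    proof (intro allI impI)
      fix x y assume xy: "x \<le> n" "y \<le> n"
      have "cs A x y = cs A' x y" unfolding cs_def
        using h xy by (intro sum.cong refl) auto
      then show "cs A x y = cs B x y + R x y" using csA' by simp
    qed
  next
    assume h: ?C
    show ?Q
    proof (intro ballI)
      fix p q assume pq: "p \<in> {1..n}" "q \<in> {1..n}"
      have "A p q = cs A p q - cs A (p-1) q - cs A p (q-1) + cs A (p-1) (q-1)"
        using pq by (intro cs_entry) auto
      also have "\<dots> = cs A' p q - cs A' (p-1) q - cs A' p (q-1) + cs A' (p-1) (q-1)"
      proof -
        have "p \<le> n" "p - 1 \<le> n" "q \<le> n" "q - 1 \<le> n" using pq by auto
        then have "cs A p q = cs B p q + R p q" "cs A (p-1) q = cs B (p-1) q + R (p-1) q"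
          "cs A p (q-1) = cs B p (q-1) + R p (q-1)" "cs A (p-1) (q-1) = cs B (p-1) (q-1) + R (p-1) (q-1)"
          using h by blast+
        then show ?thesis by (simp only: csA')
      qed
      also have "\<dots> = A' p q"
        using pq by (intro cs_entry[symmetric]) auto
      finally show "A p q = A' p q" .
    qed
  qed
  have R0: "\<And>y. R 0 y = 0" "\<And>x. R x 0 = 0" using ij by (auto simp: R_def rect_ind_def)
  have sumR: "(\<Sum>p\<in>{1..n}. \<Sum>q\<in>{1..n}. R p q) > 0"
    unfolding R_def using sumR_pos ij by blast
  have main: "(is_asm n A \<and> asm_edge n i j k l A B) \<longleftrightarrow> (\<forall>x\<le>n. \<forall>y\<le>n. cs A x y = cs B x y + R x y)"
    (is "?L \<longleftrightarrow> ?C")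
  proof
    assume L: ?L
    then have hB: "\<forall>p\<in>{1..n}. \<forall>q\<in>{1..n}. cs B p q = r_cs i j k l A p q"
      and hb: "beta n A < beta n B" by (auto simp: asm_edge_def)
    have nE: "\<not> ess_rect A i j k l"
    proof
      assume e: "ess_rect A i j k l"
      have "\<forall>p\<in>{1..n}. \<forall>q\<in>{1..n}. cs B p q = cs A p q + R p q"
        using hB e by (simp add: r_cs_def R_def)
      from sum2_shift[OF this] sumR hb show False by (simp add: beta_def)
    qed
    have dE: "dual_ess_rect A i j k l"
    proof (rule ccontr)
      assume e: "\<not> dual_ess_rect A i j k l"
      have "\<forall>p\<in>{1..n}. \<forall>q\<in>{1..n}. cs B p q = cs A p q + 0"
        using hB e nE by (simp add: r_cs_def)
      from sum2_shift[OF this] hb show False by (simp add: beta_def)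
    qed
    show ?C
    proof (intro allI impI)
      fix x y assume xy: "x \<le> n" "y \<le> n"
      show "cs A x y = cs B x y + R x y"
      proof (cases "x = 0 \<or> y = 0")
        case True then show ?thesis using R0 by (auto simp: cs_def)
      next
        case False
        then have "x \<in> {1..n}" "y \<in> {1..n}" using xy by auto
        then show ?thesis using hB nE dE by (simp add: r_cs_def R_def)
      qed
    qed
  next
    assume C: ?C
    have hA: "\<forall>p\<in>{1..n}. \<forall>q\<in>{1..n}. A p q = A' p q" using E3 C by blast
    have hC: "\<And>x y. x \<le> n \<Longrightarrow> y \<le> n \<Longrightarrow> cs A x y = cs B x y + R x y" using C by blast
    have ess: "\<And>p q. i \<le> p \<Longrightarrow> p < j \<Longrightarrow> k \<le> q \<Longrightarrow> q < l \<Longrightarrow>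
        cs B p k = cs B p (k - 1) \<and> cs B p l = cs B p (l - 1) + 1 \<and>
        cs B i q = cs B (i - 1) q \<and> cs B j q = cs B (j - 1) q + 1"
      using assms(8) unfolding ess_rect_def by blast
    have dE: "dual_ess_rect A i j k l"
      unfolding dual_ess_rect_def
    proof (intro allI impI)
      fix p q assume pq: "i \<le> p \<and> p < j \<and> k \<le> q \<and> q < l"
      have b: "p \<le> n" "k \<le> n" "k - 1 \<le> n" "l \<le> n" "l - 1 \<le> n" "q \<le> n" "i \<le> n" "i - 1 \<le> n" "j \<le> n" "j - 1 \<le> n"
        using pq ij by auto
      have r: "R p k = 1" "R p (k-1) = 0" "R p l = 0" "R p (l-1) = 1"
         "R i q = 1" "R (i-1) q = 0" "R j q = 0" "R (j-1) q = 1"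
        using pq ij by (auto simp: R_def rect_ind_def)
      show "cs A p k = cs A p (k - 1) + 1 \<and> cs A p l = cs A p (l - 1) \<and>
          cs A i q = cs A (i - 1) q + 1 \<and> cs A j q = cs A (j - 1) q"
        using ess[of p q] pq hC[OF b(1) b(2)] hC[OF b(1) b(3)] hC[OF b(1) b(4)] hC[OF b(1) b(5)]
          hC[OF b(7) b(6)] hC[OF b(8) b(6)] hC[OF b(9) b(6)] hC[OF b(10) b(6)] r
        by simp
    qed
    have nE: "\<not> ess_rect A i j k l"
    proof
      assume "ess_rect A i j k l"
      then have "cs A i k = cs A i (k - 1)" using ij unfolding ess_rect_def by auto
      moreover have "cs A i k = cs A i (k - 1) + 1" using dE ij unfolding dual_ess_rect_def by auto
      ultimately show False by simp
    qed
    have rc: "\<forall>p\<in>{1..n}. \<forall>q\<in>{1..n}. cs B p q = r_cs i j k l A p q"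
      using nE dE hC by (auto simp: r_cs_def R_def)
    have hb: "beta n A < beta n B"
    proof -
      have "\<forall>p\<in>{1..n}. \<forall>q\<in>{1..n}. cs A p q = cs B p q + R p q" using hC by auto
      from sum2_shift[OF this] sumR show ?thesis by (simp add: beta_def)
    qed
    have asmA: "is_asm n A"
    proof -
      have hA': "\<And>p q. p \<in> {1..n} \<Longrightarrow> q \<in> {1..n} \<Longrightarrow> A p q = B p q + (ind i p - ind j p) * (ind k q - ind l q)"
        using hA by (auto simp: A'_def D_def)
      have rowA: "\<And>p q. p \<in> {1..n} \<Longrightarrow> q \<le> n \<Longrightarrow> (\<Sum>r\<in>{1..q}. A p r) = (\<Sum>r\<in>{1..q}. B p r)
          + (ind i p - ind j p) * ((if k \<le> q then 1 else 0) - (if l \<le> q then 1 else 0))"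
      proof -
        fix p q assume pq: "p \<in> {1..n}" "q \<le> n"
        have "(\<Sum>r\<in>{1..q}. A p r) = (\<Sum>r\<in>{1..q}. B p r + (ind i p - ind j p) * (ind k r - ind l r))"
          using hA' pq by (intro sum.cong) auto
        also have "\<dots> = (\<Sum>r\<in>{1..q}. B p r) + (ind i p - ind j p) * ((\<Sum>r\<in>{1..q}. ind k r) - (\<Sum>r\<in>{1..q}. ind l r))"
          by (simp add: sum.distrib sum_distrib_left sum_subtractf right_diff_distrib)
        also have "\<dots> = (\<Sum>r\<in>{1..q}. B p r) + (ind i p - ind j p) * ((if k \<le> q then 1 else 0) - (if l \<le> q then 1 else 0))"
          using sum_ind[of k q] sum_ind[of l q] ij by simp
        finally show "?thesis p q" .
      qed
      have colA: "\<And>p q. q \<in> {1..n} \<Longrightarrow> p \<le> n \<Longrightarrow> (\<Sum>r\<in>{1..p}. A r q) = (\<Sum>r\<in>{1..p}. B r q)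
          + ((if i \<le> p then 1 else 0) - (if j \<le> p then 1 else 0)) * (ind k q - ind l q)"
      proof -
        fix p q assume pq: "q \<in> {1..n}" "p \<le> n"
        have "(\<Sum>r\<in>{1..p}. A r q) = (\<Sum>r\<in>{1..p}. B r q + (ind i r - ind j r) * (ind k q - ind l q))"
          using hA' pq by (intro sum.cong) auto
        also have "\<dots> = (\<Sum>r\<in>{1..p}. B r q) + ((\<Sum>r\<in>{1..p}. ind i r) - (\<Sum>r\<in>{1..p}. ind j r)) * (ind k q - ind l q)"
          by (simp add: sum.distrib sum_distrib_right sum_subtractf left_diff_distrib)
        also have "\<dots> = (\<Sum>r\<in>{1..p}. B r q) + ((if i \<le> p then 1 else 0) - (if j \<le> p then 1 else 0)) * (ind k q - ind l q)"
          using sum_ind[of i p] sum_ind[of j p] ij by simp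
        finally show "?thesis p q" .
      qed
      have Bent: "\<And>p q. p \<in> {1..n} \<Longrightarrow> q \<in> {1..n} \<Longrightarrow> B p q \<in> {-1,0,1}"
        and Brow: "\<And>p q. p \<in> {1..n} \<Longrightarrow> q \<in> {1..n} \<Longrightarrow> (\<Sum>r\<in>{1..q}. B p r) \<in> {0,1}"
        and Bcol: "\<And>p q. p \<in> {1..n} \<Longrightarrow> q \<in> {1..n} \<Longrightarrow> (\<Sum>r\<in>{1..p}. B r q) \<in> {0,1}"
        and Bfr: "\<And>p. p \<in> {1..n} \<Longrightarrow> (\<Sum>r\<in>{1..n}. B p r) = 1"
        and Bfc: "\<And>q. q \<in> {1..n} \<Longrightarrow> (\<Sum>r\<in>{1..n}. B r q) = 1"
        using assms(1) unfolding is_asm_def by blast+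
      have Brow0: "\<And>p q. p \<in> {1..n} \<Longrightarrow> q \<le> n \<Longrightarrow> (\<Sum>r\<in>{1..q}. B p r) \<in> {0,1}"
      proof -
        fix p q assume "p \<in> {1..n}" "q \<le> n"
        then show "?thesis p q" using Brow[of p q] by (cases "q = 0") auto
      qed
      have essrow: "\<And>q. k \<le> q \<Longrightarrow> q < l \<Longrightarrow> (\<Sum>r\<in>{1..q}. B i r) = 0 \<and> (\<Sum>r\<in>{1..q}. B j r) = 1"
      proof -
        fix q assume q: "k \<le> q" "q < l"
        show "?thesis q" using ess[of i q] q ij cs_row[of i B q] cs_row[of j B q] by auto
      qed
      have esscol: "\<And>p. i \<le> p \<Longrightarrow> p < j \<Longrightarrow> (\<Sum>r\<in>{1..p}. B r k) = 0 \<and> (\<Sum>r\<in>{1..p}. B r l) = 1"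
      proof -
        fix p assume p: "i \<le> p" "p < j"
        show "?thesis p" using ess[of p k] p ij cs_col[of k B p] cs_col[of l B p] by auto
      qed
      have c1: "\<forall>p\<in>{1..n}. \<forall>q\<in>{1..n}. A p q \<in> {-1, 0, 1}"
      proof (intro ballI)
        fix p q assume pq: "p \<in> {1..n}" "q \<in> {1..n}"
        show "A p q \<in> {-1, 0, 1}"
        proof (cases "(p,q) \<in> {(i, k), (i, l), (j, k), (j, l)}")
          case False
          then show ?thesis using hA pq D0[OF False] Bent[OF pq] by (simp add: A'_def)
        next
          case True
          have ik: "A i k = B i k + 1" "A i l = B i l - 1" "A j k = B j k - 1" "A j l = B j l + 1"
            using hA Dv ij by (auto simp: A'_def)
          have st: "B i k = (\<Sum>r\<in>{1..k}. B i r) - (\<Sum>r\<in>{1..k-1}. B i r)"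
            "B i l = (\<Sum>r\<in>{1..l}. B i r) - (\<Sum>r\<in>{1..l-1}. B i r)"
            "B j k = (\<Sum>r\<in>{1..k}. B j r) - (\<Sum>r\<in>{1..k-1}. B j r)"
            "B j l = (\<Sum>r\<in>{1..l}. B j r) - (\<Sum>r\<in>{1..l-1}. B j r)"
            using rs_step[of k B i] rs_step[of l B i] rs_step[of k B j] rs_step[of l B j] ij by auto
          have e1: "(\<Sum>r\<in>{1..k}. B i r) = 0" "(\<Sum>r\<in>{1..l-1}. B i r) = 0"
            "(\<Sum>r\<in>{1..k}. B j r) = 1" "(\<Sum>r\<in>{1..l-1}. B j r) = 1"
            using essrow[of k] essrow[of "l-1"] ij by auto
          have ri: "i \<in> {1..n}" "j \<in> {1..n}" using ij by auto
          have e2: "(\<Sum>r\<in>{1..k-1}. B i r) \<in> {0,1}" "(\<Sum>r\<in>{1..l}. B i r) \<in> {0,1}"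
            "(\<Sum>r\<in>{1..k-1}. B j r) \<in> {0,1}" "(\<Sum>r\<in>{1..l}. B j r) \<in> {0,1}"
            using Brow0[OF ri(1), of "k-1"] Brow0[OF ri(1), of l] Brow0[OF ri(2), of "k-1"] Brow0[OF ri(2), of l] ij
            by auto
          show ?thesis using True ik st e1 e2 by auto
        qed
      qed
      have c2: "\<forall>p\<in>{1..n}. \<forall>q\<in>{1..n}. (\<Sum>r\<in>{1..q}. A p r) \<in> {0, 1}"
      proof (intro ballI)
        fix p q assume pq: "p \<in> {1..n}" "q \<in> {1..n}"
        show "(\<Sum>r\<in>{1..q}. A p r) \<in> {0, 1}"
          using rowA[of p q] pq Brow[OF pq] essrow[of q] ij by (auto simp: ind_def)
      qed
      have c3: "\<forall>p\<in>{1..n}. \<forall>q\<in>{1..n}. (\<Sum>r\<in>{1..p}. A r q) \<in> {0, 1}"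
      proof (intro ballI)
        fix p q assume pq: "p \<in> {1..n}" "q \<in> {1..n}"
        show "(\<Sum>r\<in>{1..p}. A r q) \<in> {0, 1}"
          using colA[of q p] pq Bcol[OF pq] esscol[of p] ij by (auto simp: ind_def)
      qed
      have c4: "\<forall>p\<in>{1..n}. (\<Sum>r\<in>{1..n}. A p r) = 1"
        using rowA Bfr ij by simp
      have c5: "\<forall>q\<in>{1..n}. (\<Sum>r\<in>{1..n}. A r q) = 1"
        using colA Bfc ij by simp
      show ?thesis unfolding is_asm_def using c1 c2 c3 c4 c5 by blast
    qed
    show ?L using asmA rc hb assms(1) by (simp add: asm_edge_def)
  qed
  show ?thesis using main E2 E3 by simp
qed

end
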